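(* Let $f,g\in\Lambda[t]$. Suppose there exists $n_0$ such that $f(c(2\lambda))=g(c(2\lambda))$ for all Young diagrams $\lambda$ with $|\lambda|\geq n_0$. Then $f=g$.
   Context: $\Lambda[t]$ is the algebra over ${\mathbb Q}[t]$ of symmetric functions in $x_1,x_2,\ldots$. The content of the box in row $x$ and column $y$ of a Young diagram is $y-x$, and $c(\lambda)$ is the multiset of contents of all boxes of $\lambda$. For a Young diagram $\lambda$ with $n$ boxes, $f(c(\lambda))$ is obtained by setting $t=n$, $x_i=0$ for $i>n$, and $\{x_1,\ldots,x_n\}=c(\lambda)$. $2\lambda$ is the Young diagram obtained by doubling every row length of $\lambda$, and $|\lambda|$ is the number of boxes of $\lambda$. *)

theory Defs
  imports "HOL-Computational_Algebra.Polynomial" "HOL-Library.Multiset"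
begin

text \<open>Variables are x_0, x_1, x_2, ... (0-indexed; the paper's x_i is our x_(i-1)).
  A monomial is an exponent vector alpha :: nat => nat with finite support.
  An element of Lambda[t] is a formal power series in the x's with coefficients in Q[t]
  (a function from exponent vectors to rat poly, zero on non-finitely-supported vectors),
  of bounded degree and invariant under all permutations of the variables.\<close>

type_synonym symfun = "(nat \<Rightarrow> nat) \<Rightarrow> rat poly"

definition mon_support :: "(nat \<Rightarrow> nat) \<Rightarrow> nat set" where
  "mon_support \<alpha> = {i. \<alpha> i \<noteq> 0}"

definition mon_degree :: "(nat \<Rightarrow> nat) \<Rightarrow> nat" where
  "mon_degree \<alpha> = (\<Sum>i\<in>mon_support \<alpha>. \<alpha> i)"

definition is_symfun :: "symfun \<Rightarrow> bool" where
  "is_symfun f \<longleftrightarrow>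
     (\<forall>\<alpha>. f \<alpha> \<noteq> 0 \<longrightarrow> finite (mon_support \<alpha>)) \<and>
     (\<exists>D. \<forall>\<alpha>. f \<alpha> \<noteq> 0 \<longrightarrow> mon_degree \<alpha> \<le> D) \<and>
     (\<forall>\<sigma> \<alpha>. bij \<sigma> \<longrightarrow> f (\<alpha> \<circ> \<sigma>) = f \<alpha>)"

definition eval_sym :: "symfun \<Rightarrow> nat \<Rightarrow> rat list \<Rightarrow> rat" where
  "eval_sym f n v =
     (\<Sum>\<alpha>\<in>{\<alpha>. mon_support \<alpha> \<subseteq> {..<n} \<and> f \<alpha> \<noteq> 0}.
        poly (f \<alpha>) (of_nat n) * (\<Prod>i<n. (v ! i) ^ \<alpha> i))"

definition young :: "nat list \<Rightarrow> bool" where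
  "young lam \<longleftrightarrow> sorted (rev lam) \<and> (\<forall>r\<in>set lam. 0 < r)"

definition size_yd :: "nat list \<Rightarrow> nat" where
  "size_yd lam = sum_list lam"

definition double_yd :: "nat list \<Rightarrow> nat list" where
  "double_yd lam = map (\<lambda>r. 2 * r) lam"

text \<open>Multiset of contents y - x of boxes (row x, column y), 1-indexed.\<close>
definition contents :: "nat list \<Rightarrow> int multiset" where
  "contents lam = mset (concat (map (\<lambda>x. map (\<lambda>y. int y - int x) [1..<lam ! (x - 1) + 1])
                                  [1..<length lam + 1]))"

text \<open>f(c(lambda)): t = |lambda|, {x_1..x_n} = c(lambda) (order irrelevant by symmetry).\<close>
definition eval_contents :: "symfun \<Rightarrow> nat list \<Rightarrow> rat" where
  "eval_contents f lam =
     eval_sym f (size_yd lam) (map of_int (sorted_list_of_multiset (contents lam)))"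

end

theory Submission
  imports Defs
begin



definition cons0 :: "nat \<Rightarrow> (nat \<Rightarrow> nat) \<Rightarrow> (nat \<Rightarrow> nat)" where
  "cons0 j \<beta> = (\<lambda>i. case i of 0 \<Rightarrow> j | Suc i' \<Rightarrow> \<beta> i')"

lemma cons0_0[simp]: "cons0 j \<beta> 0 = j" and cons0_Suc[simp]: "cons0 j \<beta> (Suc i) = \<beta> i"
  by (auto simp: cons0_def)

definition Dj :: "nat \<Rightarrow> symfun \<Rightarrow> symfun" where
  "Dj j h = (\<lambda>\<beta>. h (cons0 j \<beta>))"

fun ev :: "nat \<Rightarrow> symfun \<Rightarrow> rat \<Rightarrow> rat list \<Rightarrow> rat" where
  "ev N h t [] = poly (h (\<lambda>_. 0)) t"
| "ev N h t (e # w) = (\<Sum>j\<le>N. e ^ j * ev N (Dj j h) t w)"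

definition symm :: "symfun \<Rightarrow> bool" where
  "symm h \<longleftrightarrow> (\<forall>\<sigma> \<alpha>. bij \<sigma> \<longrightarrow> h (\<alpha> \<circ> \<sigma>) = h \<alpha>)"

definition fs :: "symfun \<Rightarrow> bool" where
  "fs h \<longleftrightarrow> (\<forall>\<alpha>. h \<alpha> \<noteq> 0 \<longrightarrow> finite (mon_support \<alpha>))"

definition dg :: "nat \<Rightarrow> symfun \<Rightarrow> bool" where
  "dg d h \<longleftrightarrow> (\<forall>\<alpha>. h \<alpha> \<noteq> 0 \<longrightarrow> mon_degree \<alpha> \<le> d)"

definition bd :: "nat \<Rightarrow> symfun \<Rightarrow> bool" where
  "bd N h \<longleftrightarrow> (\<forall>\<alpha>. h \<alpha> \<noteq> 0 \<longrightarrow> (\<forall>i. \<alpha> i \<le> N))"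

lemma supp_cons0: "mon_support (cons0 j \<beta>) = (if j = 0 then {} else {0}) \<union> Suc ` mon_support \<beta>"
  apply (rule set_eqI)
  subgoal for x by (cases x) (auto simp: mon_support_def)
  done

lemma finite_supp_cons0: "finite (mon_support (cons0 j \<beta>)) \<longleftrightarrow> finite (mon_support \<beta>)"
  by (auto simp: supp_cons0 finite_image_iff)

lemma mon_degree_sub: "finite A \<Longrightarrow> mon_support \<alpha> \<subseteq> A \<Longrightarrow> mon_degree \<alpha> = (\<Sum>i\<in>A. \<alpha> i)"
  unfolding mon_degree_def
  by (rule sum.mono_neutral_left) (auto simp: mon_support_def)

lemma finite_supp_bound: "finite (mon_support \<alpha>) \<Longrightarrow> \<exists>m. mon_support \<alpha> \<subseteq> {..<m}"
  by (meson finite_nat_iff_bounded)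

lemma mon_degree_cons0:
  assumes "finite (mon_support \<beta>)"
  shows "mon_degree (cons0 j \<beta>) = j + mon_degree \<beta>"
proof -
  obtain m where m: "mon_support \<beta> \<subseteq> {..<m}" using finite_supp_bound[OF assms] by blast
  have "mon_support (cons0 j \<beta>) \<subseteq> {..<Suc m}" using m by (auto simp: supp_cons0)
  then have "mon_degree (cons0 j \<beta>) = (\<Sum>i<Suc m. cons0 j \<beta> i)" by (rule mon_degree_sub[rotated]) simp
  also have "\<dots> = j + (\<Sum>i<m. \<beta> i)" by (subst sum.lessThan_Suc_shift) simp
  also have "\<dots> = j + mon_degree \<beta>" using m by (simp add: mon_degree_sub[of "{..<m}"])
  finally show ?thesis .
qed

lemma entry_le_degree: "finite (mon_support \<alpha>) \<Longrightarrow> \<alpha> i \<le> mon_degree \<alpha>"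
  unfolding mon_degree_def
  by (cases "\<alpha> i = 0") (auto simp: mon_support_def intro!: member_le_sum)

lemma symm_Dj: "symm h \<Longrightarrow> symm (Dj j h)"
  unfolding symm_def Dj_def
proof (intro allI impI)
  fix \<sigma> :: "nat \<Rightarrow> nat" and \<beta>
  assume H: "\<forall>\<sigma> \<alpha>. bij \<sigma> \<longrightarrow> h (\<alpha> \<circ> \<sigma>) = h \<alpha>" and b: "bij \<sigma>"
  define \<tau> where "\<tau> = (\<lambda>i. case i of 0 \<Rightarrow> 0 | Suc i' \<Rightarrow> Suc (\<sigma> i'))"
  have "bij \<tau>"
  proof (rule o_bij[where g = "\<lambda>i. case i of 0 \<Rightarrow> 0 | Suc i' \<Rightarrow> Suc (inv \<sigma> i')"])
    show "(\<lambda>i. case i of 0 \<Rightarrow> 0 | Suc i' \<Rightarrow> Suc (inv \<sigma> i')) \<circ> \<tau> = id"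
      using b by (auto simp: \<tau>_def fun_eq_iff bij_def split: nat.splits)
    show "\<tau> \<circ> (\<lambda>i. case i of 0 \<Rightarrow> 0 | Suc i' \<Rightarrow> Suc (inv \<sigma> i')) = id"
      using b by (auto simp: \<tau>_def fun_eq_iff bij_def surj_f_inv_f split: nat.splits)
  qed
  moreover have "cons0 j (\<beta> \<circ> \<sigma>) = cons0 j \<beta> \<circ> \<tau>"
    by (auto simp: fun_eq_iff \<tau>_def cons0_def split: nat.splits)
  ultimately show "h (cons0 j (\<beta> \<circ> \<sigma>)) = h (cons0 j \<beta>)" using H by simp
qed

lemma fs_Dj: "fs h \<Longrightarrow> fs (Dj j h)"
  unfolding fs_def Dj_def using finite_supp_cons0 by blast

lemma bd_Dj: "bd N h \<Longrightarrow> bd N (Dj j h)"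
  unfolding bd_def Dj_def by (metis cons0_Suc)

lemma dg_Dj: "fs h \<Longrightarrow> dg d h \<Longrightarrow> dg (d - j) (Dj j h)"
  unfolding dg_def Dj_def fs_def
  by (metis add_diff_cancel_left' diff_le_mono finite_supp_cons0 mon_degree_cons0)

lemma Dj_big: "fs h \<Longrightarrow> dg d h \<Longrightarrow> d < j \<Longrightarrow> Dj j h = (\<lambda>_. 0)"
  unfolding dg_def Dj_def fs_def fun_eq_iff
  by (metis finite_supp_cons0 le_add1 mon_degree_cons0 order.trans not_le)

lemma Dj_0:
  assumes "symm h" "fs h" shows "Dj 0 h = h"
proof
  fix \<beta>
  show "Dj 0 h \<beta> = h \<beta>"
  proof (cases "finite (mon_support \<beta>)")
    case False
    then show ?thesis using assms(2) finite_supp_cons0 unfolding fs_def Dj_def by metis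
  next
    case True
    then obtain m where m: "mon_support \<beta> \<subseteq> {..<m}" using finite_supp_bound by blast
    define \<sigma> where "\<sigma> = (\<lambda>i::nat. if i = 0 then m else if i \<le> m then i - 1 else i)"
    define \<rho> where "\<rho> = (\<lambda>i::nat. if i = m then 0 else if i < m then i + 1 else i)"
    have "bij \<sigma>"
      by (rule o_bij[where g = \<rho>]) (auto simp: fun_eq_iff \<sigma>_def \<rho>_def)
    moreover have "\<beta> \<circ> \<sigma> = cons0 0 \<beta>"
    proof
      fix i show "(\<beta> \<circ> \<sigma>) i = cons0 0 \<beta> i"
      proof (cases i)
        case (Suc n)
        show ?thesis
        proof (cases "n < m")
          case False
          then have "\<beta> n = 0" "\<beta> (Suc n) = 0" using m by (auto simp: mon_support_def subset_iff)
          then show ?thesis using False Suc by (simp add: \<sigma>_def)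
        qed (simp add: Suc \<sigma>_def)
      qed (use m in \<open>auto simp: \<sigma>_def mon_support_def subset_iff\<close>)
    qed
    ultimately show ?thesis using assms(1) unfolding symm_def Dj_def by metis
  qed
qed

lemma Dj_comm:
  assumes "symm h" shows "Dj j (Dj j' h) = Dj j' (Dj j h)"
proof
  fix \<beta>
  define \<sigma> where "\<sigma> = (\<lambda>i::nat. if i = 0 then 1 else if i = 1 then 0 else i)"
  have "bij \<sigma>" by (rule o_bij[where g = \<sigma>]) (auto simp: fun_eq_iff \<sigma>_def)
  moreover have "cons0 j' (cons0 j \<beta>) \<circ> \<sigma> = cons0 j (cons0 j' \<beta>)"
  proof
    fix i show "(cons0 j' (cons0 j \<beta>) \<circ> \<sigma>) i = cons0 j (cons0 j' \<beta>) i"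
      by (cases i; cases "i - 1") (auto simp: \<sigma>_def)
  qed
  ultimately show "Dj j (Dj j' h) \<beta> = Dj j' (Dj j h) \<beta>"
    using assms unfolding symm_def Dj_def by metis
qed




lemma ev_zero: "ev N (\<lambda>_. 0) t w = 0"
proof (induction w)
  case (Cons e w) then show ?case by (simp add: Dj_def)
qed simp

lemma ev_sum: "finite I \<Longrightarrow> ev N (\<lambda>\<alpha>. \<Sum>i\<in>I. H i \<alpha>) t w = (\<Sum>i\<in>I. ev N (H i) t w)"
proof (induction w arbitrary: H)
  case Nil then show ?case by (simp add: poly_sum)
next
  case (Cons e w)
  have "Dj j (\<lambda>\<alpha>. \<Sum>i\<in>I. H i \<alpha>) = (\<lambda>\<alpha>. \<Sum>i\<in>I. Dj j (H i) \<alpha>)" for j by (simp add: Dj_def)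
  then show ?case using Cons by (simp add: sum_distrib_left sum.swap[of _ I])
qed

lemma ev_add: "ev N (\<lambda>\<alpha>. h1 \<alpha> + h2 \<alpha>) t w = ev N h1 t w + ev N h2 t w"
proof (induction w arbitrary: h1 h2)
  case (Cons e w)
  have "Dj j (\<lambda>\<alpha>. h1 \<alpha> + h2 \<alpha>) = (\<lambda>\<alpha>. Dj j h1 \<alpha> + Dj j h2 \<alpha>)" for j by (simp add: Dj_def)
  then show ?case using Cons by (simp add: distrib_left sum.distrib)
qed simp

lemma ev_diff: "ev N (\<lambda>\<alpha>. h1 \<alpha> - h2 \<alpha>) t w = ev N h1 t w - ev N h2 t w"
proof (induction w arbitrary: h1 h2)
  case (Cons e w)
  have "Dj j (\<lambda>\<alpha>. h1 \<alpha> - h2 \<alpha>) = (\<lambda>\<alpha>. Dj j h1 \<alpha> - Dj j h2 \<alpha>)" for j by (simp add: Dj_def)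
  then show ?case using Cons by (simp add: right_diff_distrib sum_subtractf)
qed simp

lemma ev_smult: "ev N (\<lambda>\<alpha>. smult c (h \<alpha>)) t w = c * ev N h t w"
proof (induction w arbitrary: h)
  case (Cons e w)
  have "Dj j (\<lambda>\<alpha>. smult c (h \<alpha>)) = (\<lambda>\<alpha>. smult c (Dj j h \<alpha>))" for j by (simp add: Dj_def)
  then show ?case using Cons by (simp add: sum_distrib_left mult.left_commute)
qed simp

lemma ev_swap:
  assumes "symm h" shows "ev N h t (a # b # w) = ev N h t (b # a # w)"
proof -
  have "ev N h t (a # b # w) = (\<Sum>j\<le>N. \<Sum>j'\<le>N. a ^ j * b ^ j' * ev N (Dj j' (Dj j h)) t w)"
    by (simp add: sum_distrib_left mult.assoc)
  also have "\<dots> = (\<Sum>j'\<le>N. \<Sum>j\<le>N. a ^ j * b ^ j' * ev N (Dj j' (Dj j h)) t w)"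
    by (rule sum.swap)
  also have "\<dots> = ev N h t (b # a # w)"
    using Dj_comm[OF assms] by (simp add: sum_distrib_left mult.assoc mult.left_commute)
  finally show ?thesis .
qed

lemma ev_middle:
  assumes "symm h" shows "ev N h t (xs @ b # ys) = ev N h t (b # xs @ ys)"
  using assms
proof (induction xs arbitrary: h)
  case (Cons x xs)
  have "ev N h t ((x # xs) @ b # ys) = (\<Sum>j\<le>N. x ^ j * ev N (Dj j h) t (b # xs @ ys))"
    using Cons symm_Dj by simp
  also have "\<dots> = ev N h t (x # b # xs @ ys)" by simp
  also have "\<dots> = ev N h t (b # x # xs @ ys)" by (rule ev_swap[OF Cons.prems])
  finally show ?case by simp
qed simp

lemma ev_perm:
  assumes "symm h" "mset w = mset w'" shows "ev N h t w = ev N h t w'"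
  using assms
proof (induction w arbitrary: h w')
  case Nil then show ?case by simp
next
  case (Cons x xs)
  have "x \<in> set w'" using Cons.prems(2) by (metis list.set_intros(1) mset_eq_setD)
  then obtain us vs where w': "w' = us @ x # vs" by (meson split_list)
  have m: "mset xs = mset (us @ vs)" using Cons.prems(2) w' by simp
  have "ev N h t w' = ev N h t (x # us @ vs)" using w' ev_middle[OF Cons.prems(1)] by simp
  also have "\<dots> = ev N h t (x # xs)"
    using Cons.IH[OF symm_Dj[OF Cons.prems(1)] m] by simp
  finally show ?case by simp
qed

lemma ev_poly_t: "\<exists>q. \<forall>t. ev N h t w = poly q t"
proof (induction w arbitrary: h)
  case Nil then show ?case by auto
next
  case (Cons e w)
  then have "\<forall>j. \<exists>q. \<forall>t. ev N (Dj j h) t w = poly q t" by blast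
  from choice[OF this] obtain Q where Q: "\<And>j t. ev N (Dj j h) t w = poly (Q j) t" by blast
  show ?case
    by (rule exI[of _ "\<Sum>j\<le>N. smult (e ^ j) (Q j)"]) (simp add: Q poly_sum)
qed

definition S :: "nat \<Rightarrow> nat \<Rightarrow> (nat \<Rightarrow> nat) set" where
  "S N n = {\<alpha>. (\<forall>i\<ge>n. \<alpha> i = 0) \<and> (\<forall>i. \<alpha> i \<le> N)}"

lemma finite_S: "finite (S N n)"
proof -
  have "S N n \<subseteq> {f. \<forall>x. (x \<in> {..<n} \<longrightarrow> f x \<in> {..N}) \<and> (x \<notin> {..<n} \<longrightarrow> f x = 0)}"
    by (auto simp: S_def)
  then show ?thesis using finite_set_of_finite_funs[of "{..<n}" "{..N}" 0] finite_subset by blast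
qed

lemma S_Suc: "S N (Suc n) = (\<lambda>(j, \<beta>). cons0 j \<beta>) ` ({..N} \<times> S N n)"
proof (rule set_eqI, rule iffI)
  fix \<alpha> assume a: "\<alpha> \<in> S N (Suc n)"
  have "\<alpha> = cons0 (\<alpha> 0) (\<lambda>i. \<alpha> (Suc i))"
    by (auto simp: fun_eq_iff cons0_def split: nat.splits)
  moreover have "(\<alpha> 0, \<lambda>i. \<alpha> (Suc i)) \<in> {..N} \<times> S N n" using a by (auto simp: S_def)
  ultimately show "\<alpha> \<in> (\<lambda>(j, \<beta>). cons0 j \<beta>) ` ({..N} \<times> S N n)" by force
next
  fix \<alpha> assume "\<alpha> \<in> (\<lambda>(j, \<beta>). cons0 j \<beta>) ` ({..N} \<times> S N n)"
  then obtain j \<beta> where "\<alpha> = cons0 j \<beta>" "j \<le> N" "\<beta> \<in> S N n" by auto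
  then show "\<alpha> \<in> S N (Suc n)"
    by (auto simp: S_def cons0_def split: nat.splits)
qed

lemma inj_cons0: "inj (\<lambda>(j, \<beta>). cons0 j \<beta>)"
proof (rule injI, clarify)
  fix j \<beta> j' \<beta>' assume "cons0 j \<beta> = cons0 j' \<beta>'"
  then have "cons0 j \<beta> 0 = cons0 j' \<beta>' 0" "\<And>i. cons0 j \<beta> (Suc i) = cons0 j' \<beta>' (Suc i)" by metis+
  then show "j = j' \<and> \<beta> = \<beta>'" by (auto simp: fun_eq_iff)
qed

lemma sum_S_Suc: "(\<Sum>\<alpha>\<in>S N (Suc n). F \<alpha>) = (\<Sum>j\<le>N. \<Sum>\<beta>\<in>S N n. F (cons0 j \<beta>))"
proof -
  have "(\<Sum>\<alpha>\<in>S N (Suc n). F \<alpha>) = (\<Sum>p\<in>{..N} \<times> S N n. F (case p of (j, \<beta>) \<Rightarrow> cons0 j \<beta>))"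
    unfolding S_Suc by (subst sum.reindex) (auto intro: inj_on_subset[OF inj_cons0])
  also have "\<dots> = (\<Sum>j\<le>N. \<Sum>\<beta>\<in>S N n. F (cons0 j \<beta>))"
    by (simp add: sum.cartesian_product split_def)
  finally show ?thesis .
qed

definition esum :: "nat \<Rightarrow> symfun \<Rightarrow> rat \<Rightarrow> rat list \<Rightarrow> rat" where
  "esum N h t w = (\<Sum>\<alpha>\<in>S N (length w). poly (h \<alpha>) t * (\<Prod>i<length w. (w ! i) ^ \<alpha> i))"

lemma S_0: "S N 0 = {\<lambda>_. 0}" by (auto simp: S_def)

lemma ev_esum: "ev N h t w = esum N h t w"
proof (induction w arbitrary: h)
  case Nil then show ?case by (simp add: esum_def S_0)
next
  case (Cons e w)
  have "esum N h t (e # w) = (\<Sum>j\<le>N. \<Sum>\<beta>\<in>S N (length w).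
          poly (h (cons0 j \<beta>)) t * (\<Prod>i<Suc (length w). ((e # w) ! i) ^ cons0 j \<beta> i))"
    unfolding esum_def by (simp add: sum_S_Suc)
  also have "\<dots> = (\<Sum>j\<le>N. e ^ j * esum N (Dj j h) t w)"
    unfolding esum_def Dj_def
    by (simp add: prod.lessThan_Suc_shift sum_distrib_left mult.left_commute del: prod.lessThan_Suc)
  finally show ?case using Cons by simp
qed




lemma eval_sym_esum:
  assumes "bd N h" "length w = n"
  shows "eval_sym h n w = esum N h (of_nat n) w"
proof -
  have sub: "{\<alpha>. mon_support \<alpha> \<subseteq> {..<n} \<and> h \<alpha> \<noteq> 0} \<subseteq> S N n"
    using assms(1) by (auto simp: S_def bd_def mon_support_def subset_iff not_less)
  show ?thesis
    unfolding eval_sym_def esum_def assms(2)[symmetric]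
    by (rule sum.mono_neutral_left[OF finite_S sub[unfolded assms(2)[symmetric]]])
       (auto simp: S_def mon_support_def)
qed

fun cloff :: "nat \<Rightarrow> nat list \<Rightarrow> int list" where
  "cloff k [] = []"
| "cloff k (r # rs) = map (\<lambda>y. int y - int (Suc k)) [1..<r+1] @ cloff (Suc k) rs"

lemma cloff_concat:
  "concat (map (\<lambda>x. map (\<lambda>y. int y - int x) [1..<lam ! (x - Suc k) + 1]) [Suc k..<length lam + Suc k])
   = cloff k lam"
proof (induction lam arbitrary: k)
  case Nil then show ?case by simp
next
  case (Cons r rs)
  have u: "[Suc k..<length (r # rs) + Suc k] = Suc k # [Suc (Suc k)..<length rs + Suc (Suc k)]"
    by (simp add: upt_rec[of "Suc k"] del: upt_Suc)
  have "map (\<lambda>x. map (\<lambda>y. int y - int x) [1..<(r # rs) ! (x - Suc k) + 1]) [Suc (Suc k)..<length rs + Suc (Suc k)]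
      = map (\<lambda>x. map (\<lambda>y. int y - int x) [1..<rs ! (x - Suc (Suc k)) + 1]) [Suc (Suc k)..<length rs + Suc (Suc k)]"
  proof (rule map_cong[OF refl])
    fix x assume "x \<in> set [Suc (Suc k)..<length rs + Suc (Suc k)]"
    then have "x - Suc k = Suc (x - Suc (Suc k))" by auto
    then show "map (\<lambda>y. int y - int x) [1..<(r # rs) ! (x - Suc k) + 1] =
               map (\<lambda>y. int y - int x) [1..<rs ! (x - Suc (Suc k)) + 1]" by simp
  qed
  note m = this
  show ?case
    unfolding u list.map concat.simps m Cons.IH[of "Suc k"] by simp
qed

lemma contents_cloff: "contents lam = mset (cloff 0 lam)"
  unfolding contents_def using cloff_concat[of lam 0] by simp

lemma cloff_append: "cloff k (xs @ ys) = cloff k xs @ cloff (k + length xs) ys"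
  by (induction xs arbitrary: k) auto

lemma length_cloff: "length (cloff k xs) = sum_list xs"
  by (induction xs arbitrary: k) auto

definition Z :: "nat \<Rightarrow> symfun \<Rightarrow> nat list \<Rightarrow> rat" where
  "Z N h rows = ev N h (of_nat (2 * sum_list rows)) (map of_int (cloff 0 (map (\<lambda>r. 2 * r) rows)))"

lemma sum_list_double: "sum_list (map (\<lambda>r. 2 * r) xs) = 2 * sum_list (xs :: nat list)"
  by (induction xs) auto

lemma eval_contents_ev:
  assumes "bd N f"
  shows "eval_contents f (double_yd lam) =
    ev N f (of_nat (2 * sum_list lam)) (map of_int (sorted_list_of_multiset (contents (double_yd lam))))"
proof -
  have len: "length (map (of_int :: int \<Rightarrow> rat) (sorted_list_of_multiset (contents (double_yd lam))))
      = size_yd (double_yd lam)"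
    by (metis contents_cloff length_cloff size_mset mset_sorted_list_of_multiset length_map size_yd_def)
  show ?thesis
    unfolding eval_contents_def eval_sym_esum[OF assms len] ev_esum
    by (simp add: size_yd_def double_yd_def sum_list_double)
qed

lemma hyp_to_Z:
  assumes "bd N f" "bd N g" "symm (\<lambda>\<alpha>. f \<alpha> - g \<alpha>)"
    and "eval_contents f (double_yd lam) = eval_contents g (double_yd lam)"
  shows "Z N (\<lambda>\<alpha>. f \<alpha> - g \<alpha>) lam = 0"
proof -
  let ?W = "map (of_int :: int \<Rightarrow> rat) (sorted_list_of_multiset (contents (double_yd lam)))"
  have "ev N (\<lambda>\<alpha>. f \<alpha> - g \<alpha>) (of_nat (2 * sum_list lam)) ?W = 0"
    using assms(4) unfolding eval_contents_ev[OF assms(1)] eval_contents_ev[OF assms(2)] ev_diff by simp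
  moreover have "mset ?W = mset (map of_int (cloff 0 (map (\<lambda>r. 2 * r) lam)))"
    by (simp add: contents_cloff double_yd_def)
  ultimately show ?thesis unfolding Z_def using ev_perm[OF assms(3)] by metis
qed




lemma pow_sum_poly: "\<exists>q. \<forall>n::nat. (\<Sum>b<n. (of_nat b :: rat) ^ k) = poly q (of_nat n)"
proof (induction k rule: less_induct)
  case (less k)
  then have "\<forall>i. \<exists>q. i < k \<longrightarrow> (\<forall>n::nat. (\<Sum>b<n. (of_nat b :: rat) ^ i) = poly q (of_nat n))" by blast
  from choice[OF this] obtain Q where Q: "\<And>i n. i < k \<Longrightarrow> (\<Sum>b<n. (of_nat b :: rat) ^ i) = poly (Q i) (of_nat n)"
    by blast
  have step: "((of_nat b :: rat) + 1) ^ Suc k - of_nat b ^ Suc k = (\<Sum>i\<le>k. of_nat (Suc k choose i) * of_nat b ^ i)" for b :: nat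
  proof -
    have "((of_nat b :: rat) + 1) ^ Suc k = (\<Sum>i\<le>Suc k. of_nat (Suc k choose i) * of_nat b ^ i * 1 ^ (Suc k - i))"
      by (rule binomial_ring)
    also have "\<dots> = (\<Sum>i\<le>k. of_nat (Suc k choose i) * of_nat b ^ i) + of_nat b ^ Suc k"
      by (simp only: sum.atMost_Suc) simp
    finally show ?thesis by simp
  qed
  have main: "(\<Sum>i\<le>k. of_nat (Suc k choose i) * (\<Sum>b<n. (of_nat b :: rat) ^ i)) = of_nat n ^ Suc k" for n :: nat
  proof -
    have "(\<Sum>i\<le>k. of_nat (Suc k choose i) * (\<Sum>b<n. (of_nat b :: rat) ^ i))
        = (\<Sum>b<n. (\<Sum>i\<le>k. of_nat (Suc k choose i) * of_nat b ^ i))"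
      by (simp add: sum_distrib_left sum.swap[of _ "{..k}"])
    also have "\<dots> = (\<Sum>b<n. (of_nat (Suc b) :: rat) ^ Suc k - of_nat b ^ Suc k)"
      using step by (simp add: add.commute)
    also have "\<dots> = of_nat n ^ Suc k"
      by (subst sum_lessThan_telescope[where f = "\<lambda>b. (of_nat b :: rat) ^ Suc k"]) simp
    finally show ?thesis .
  qed
  define q where "q = smult (1 / of_nat (Suc k)) ([:0, 1:] ^ Suc k - (\<Sum>i<k. smult (of_nat (Suc k choose i)) (Q i)))"
  show ?case
  proof (rule exI[of _ q], rule allI)
    fix n :: nat
    have "of_nat n ^ Suc k = (\<Sum>i<k. of_nat (Suc k choose i) * (\<Sum>b<n. (of_nat b :: rat) ^ i))
          + of_nat (Suc k) * (\<Sum>b<n. (of_nat b :: rat) ^ k)"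
      using main[of n] by (simp add: lessThan_Suc_atMost[symmetric] del: of_nat_Suc)
    also have "(\<Sum>i<k. of_nat (Suc k choose i) * (\<Sum>b<n. (of_nat b :: rat) ^ i))
             = (\<Sum>i<k. of_nat (Suc k choose i) * poly (Q i) (of_nat n))"
      using Q by simp
    finally have "(\<Sum>b<n. (of_nat b :: rat) ^ k) = (of_nat n ^ Suc k - (\<Sum>i<k. of_nat (Suc k choose i) * poly (Q i) (of_nat n))) / of_nat (Suc k)"
      by (simp add: field_simps del: of_nat_Suc)
    then show "(\<Sum>b<n. (of_nat b :: rat) ^ k) = poly q (of_nat n)"
      by (simp add: q_def poly_sum poly_monom divide_inverse mult.commute del: of_nat_Suc)
  qed
qed

lemma antiderivative: "\<exists>q. \<forall>n::nat. (\<Sum>b<n. poly p (of_nat b :: rat)) = poly q (of_nat n)"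
proof -
  have "\<forall>i. \<exists>q. \<forall>n::nat. (\<Sum>b<n. (of_nat b :: rat) ^ i) = poly q (of_nat n)" using pow_sum_poly by blast
  from choice[OF this] obtain Q where Q: "\<And>i n. (\<Sum>b<n. (of_nat b :: rat) ^ i) = poly (Q i) (of_nat n)" by blast
  show ?thesis
  proof (rule exI[of _ "\<Sum>i\<le>degree p. smult (coeff p i) (Q i)"], rule allI)
    fix n :: nat
    have "(\<Sum>b<n. poly p (of_nat b :: rat)) = (\<Sum>b<n. \<Sum>i\<le>degree p. coeff p i * of_nat b ^ i)"
      by (simp add: poly_altdef)
    also have "\<dots> = (\<Sum>i\<le>degree p. coeff p i * (\<Sum>b<n. of_nat b ^ i))"
      by (simp add: sum_distrib_left sum.swap[of _ "{..<n}"])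
    also have "\<dots> = poly (\<Sum>i\<le>degree p. smult (coeff p i) (Q i)) (of_nat n)"
      by (simp add: Q poly_sum)
    finally show "(\<Sum>b<n. poly p (of_nat b :: rat)) = poly (\<Sum>i\<le>degree p. smult (coeff p i) (Q i)) (of_nat n)" .
  qed
qed

definition R :: "(rat \<Rightarrow> nat \<Rightarrow> rat) \<Rightarrow> bool" where
  "R G \<longleftrightarrow> (\<exists>K p. \<forall>t a. G t a = (\<Sum>k<K. t ^ k * poly (p k) (of_nat a)))"

lemma R_zero: "R (\<lambda>t a. 0)"
  unfolding R_def by (rule exI[of _ 0]) simp

lemma R_add:
  assumes "R G1" "R G2" shows "R (\<lambda>t a. G1 t a + G2 t a)"
proof -
  obtain K1 p1 where 1: "\<And>t a. G1 t a = (\<Sum>k<K1. t ^ k * poly (p1 k) (of_nat a))" using assms(1) R_def by metis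
  obtain K2 p2 where 2: "\<And>t a. G2 t a = (\<Sum>k<K2. t ^ k * poly (p2 k) (of_nat a))" using assms(2) R_def by metis
  define K where "K = K1 + K2"
  have e: "(\<Sum>k<K''. (if k < K' then f k else 0)) = (\<Sum>k<K'. f k)" if "K' \<le> K''" for K' K'' and f :: "nat \<Rightarrow> rat"
  proof -
    have "{..<K''} \<inter> {k. k < K'} = {..<K'}" using that by auto
    then show ?thesis by (simp add: sum.If_cases)
  qed
  show ?thesis unfolding R_def
  proof (intro exI allI)
    fix t a
    have "G1 t a + G2 t a = (\<Sum>k<K. (if k < K1 then t ^ k * poly (p1 k) (of_nat a) else 0))
                + (\<Sum>k<K. (if k < K2 then t ^ k * poly (p2 k) (of_nat a) else 0))"
      by (simp add: e K_def 1 2)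
    also have "\<dots> = (\<Sum>k<K. t ^ k * poly ((if k < K1 then p1 k else 0) + (if k < K2 then p2 k else 0)) (of_nat a))"
      by (simp add: sum.distrib[symmetric] distrib_left) (rule sum.cong, auto)
    finally show "G1 t a + G2 t a = (\<Sum>k<K. t ^ k * poly ((\<lambda>k. (if k < K1 then p1 k else 0) + (if k < K2 then p2 k else 0)) k) (of_nat a))" by simp
  qed
qed

lemma R_sum: "finite I \<Longrightarrow> (\<And>i. i \<in> I \<Longrightarrow> R (G i)) \<Longrightarrow> R (\<lambda>t a. \<Sum>i\<in>I. G i t a)"
proof (induction I rule: finite_induct)
  case empty then show ?case using R_zero by simp
next
  case (insert x F)
  then show ?case using R_add[of "G x" "\<lambda>t a. \<Sum>i\<in>F. G i t a"] by simp
qed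

lemma R_mult: "R G \<Longrightarrow> R (\<lambda>t a. poly r (of_nat a) * G t a)"
  unfolding R_def
proof (elim exE)
  fix K p assume H: "\<forall>t a. G t a = (\<Sum>k<K. t ^ k * poly (p k) (of_nat a))"
  show "\<exists>K p. \<forall>t a. poly r (of_nat a) * G t a = (\<Sum>k<K. t ^ k * poly (p k) (of_nat a))"
    by (rule exI[of _ K], rule exI[of _ "\<lambda>k. r * p k"]) (simp add: H sum_distrib_left mult_ac)
qed

lemma R_const: "R (\<lambda>t a. poly q t)"
  unfolding R_def
  by (rule exI[of _ "Suc (degree q)"], rule exI[of _ "\<lambda>k. [:coeff q k:]"])
     (simp add: poly_altdef lessThan_Suc_atMost mult.commute)

lemma R_anti: "R H \<Longrightarrow> R (\<lambda>t a. \<Sum>b<a. H t b)"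
  unfolding R_def
proof (elim exE)
  fix K p assume H: "\<forall>t a. H t a = (\<Sum>k<K. t ^ k * poly (p k) (of_nat a))"
  have "\<forall>k. \<exists>q. \<forall>n::nat. (\<Sum>b<n. poly (p k) (of_nat b :: rat)) = poly q (of_nat n)"
    using antiderivative by blast
  from choice[OF this] obtain A where A: "\<And>k n. (\<Sum>b<n. poly (p k) (of_nat b :: rat)) = poly (A k) (of_nat n)"
    by blast
  show "\<exists>K p. \<forall>t a. (\<Sum>b<a. H t b) = (\<Sum>k<K. t ^ k * poly (p k) (of_nat a))"
  proof (rule exI[of _ K], rule exI[of _ A], intro allI)
    fix t a
    have "(\<Sum>b<a. H t b) = (\<Sum>b<a. \<Sum>k<K. t ^ k * poly (p k) (of_nat b))" using H by simp
    also have "\<dots> = (\<Sum>k<K. \<Sum>b<a. t ^ k * poly (p k) (of_nat b))" by (rule sum.swap)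
    also have "\<dots> = (\<Sum>k<K. t ^ k * poly (A k) (of_nat a))" by (simp add: sum_distrib_left[symmetric] A)
    finally show "(\<Sum>b<a. H t b) = (\<Sum>k<K. t ^ k * poly (A k) (of_nat a))" .
  qed
qed

lemma R_telescope:
  assumes "\<And>t a. G t (Suc a) = G t a + H t a" "R H" "\<And>t. G t 0 = poly q t"
  shows "R G"
proof -
  have "G t a = poly q t + (\<Sum>b<a. H t b)" for t a
    by (induction a) (simp_all add: assms(1,3))
  then have "G = (\<lambda>t a. poly q t + (\<Sum>b<a. H t b))" by (simp add: fun_eq_iff)
  then show ?thesis using R_add[OF R_const R_anti[OF assms(2)], of q] by simp
qed

lemma R_diag: "R G \<Longrightarrow> \<exists>q. \<forall>a. G (c + 2 * of_nat a) a = poly q (of_nat a)"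
  unfolding R_def
proof (elim exE)
  fix K p assume H: "\<forall>t a. G t a = (\<Sum>k<K. t ^ k * poly (p k) (of_nat a))"
  show "\<exists>q. \<forall>a. G (c + 2 * of_nat a) a = poly q (of_nat a)"
    by (rule exI[of _ "\<Sum>k<K. [:c, 2:] ^ k * p k"]) (simp add: H poly_sum mult.commute)
qed

lemma poly_nat_zero:
  assumes "infinite {a::nat. poly q (of_nat a :: rat) = 0}"
  shows "poly q (of_nat b) = 0"
proof -
  have "of_nat ` {a::nat. poly q (of_nat a :: rat) = 0} \<subseteq> {x. poly q x = 0}" by auto
  moreover have "infinite (of_nat ` {a::nat. poly q (of_nat a :: rat) = 0} :: rat set)"
    using assms by (simp add: finite_image_iff inj_on_def)
  ultimately have "q = 0" using poly_roots_finite finite_subset by blast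
  then show ?thesis by simp
qed




definition Iv :: "nat \<Rightarrow> nat \<Rightarrow> rat list" where
  "Iv k a = map of_int (map (\<lambda>y. int y - int (Suc k)) [1..<2 * a + 1])"

lemma Iv_0: "Iv k 0 = []" by (simp add: Iv_def)

lemma Iv_Suc: "Iv k (Suc a) = Iv k a @ [of_nat (2 * a) - of_nat k, of_nat (2 * a) - of_nat k + 1]"
proof -
  have "[1..<2 * Suc a + 1] = [1..<2 * a + 1] @ [2 * a + 1, 2 * a + 2]"
    by (simp add: numeral_eq_Suc)
  then show ?thesis by (simp add: Iv_def)
qed

lemma ev_two: "ev N h t (x # y # w) =
  (\<Sum>p\<in>{..N} \<times> {..N}. x ^ fst p * y ^ snd p * ev N (Dj (snd p) (Dj (fst p) h)) t w)"
  by (simp add: sum.cartesian_product split_def sum_distrib_left mult.assoc)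

lemma DD_props:
  assumes "symm h" "fs h" "dg d h"
  shows "symm (Dj j' (Dj j h))" "fs (Dj j' (Dj j h))" "dg (d - j - j') (Dj j' (Dj j h))"
    and "d < j + j' \<Longrightarrow> Dj j' (Dj j h) = (\<lambda>_. 0)"
proof -
  show "symm (Dj j' (Dj j h))" using assms symm_Dj by blast
  show "fs (Dj j' (Dj j h))" using assms fs_Dj by blast
  show "dg (d - j - j') (Dj j' (Dj j h))" using assms fs_Dj dg_Dj by blast
  assume "d < j + j'"
  show "Dj j' (Dj j h) = (\<lambda>_. 0)"
  proof (cases "d < j")
    case True
    then have "Dj j h = (\<lambda>_. 0)" using Dj_big assms by blast
    then show ?thesis by (simp add: Dj_def)
  next
    case False
    then show ?thesis using Dj_big[OF fs_Dj[OF assms(2)] dg_Dj[OF assms(2,3)], of j j'] \<open>d < j + j'\<close> by simp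
  qed
qed

lemma poly_interval:
  "symm h \<Longrightarrow> fs h \<Longrightarrow> dg d h \<Longrightarrow> R (\<lambda>t a. ev N h t (Iv k a @ v))"
proof (induction d arbitrary: h rule: less_induct)
  case (less d)
  define P where "P = {..N} \<times> {..N} - {(0::nat, 0::nat)}"
  define xa where "xa = (\<lambda>a::nat. (of_nat (2 * a) :: rat) - of_nat k)"
  have xa_poly: "xa a = poly [:- of_nat k, 2:] (of_nat a)" for a by (simp add: xa_def)
  have xa1_poly: "xa a + 1 = poly [:1 - of_nat k, 2:] (of_nat a)" for a by (simp add: xa_def)
  define Q where "Q = (\<lambda>p::nat\<times>nat. ([:- of_nat k, 2:] :: rat poly) ^ fst p * [:1 - of_nat k, 2:] ^ snd p)"
  have Qp: "xa a ^ fst p * (xa a + 1) ^ snd p * X = poly (Q p) (of_nat a) * X" for a p X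
    unfolding Q_def by (simp only: poly_mult poly_power xa_poly[symmetric] xa1_poly[symmetric])
  have each: "R (\<lambda>t a. ev N (Dj (snd p) (Dj (fst p) h)) t (Iv k a @ v))" if "p \<in> P" for p
  proof (cases "d < fst p + snd p")
    case True
    then show ?thesis using DD_props(4)[OF less.prems] by (simp add: ev_zero R_zero)
  next
    case False
    have "d - fst p - snd p < d" using that False by (auto simp: P_def)
    then show ?thesis using less.IH DD_props(1-3)[OF less.prems] by blast
  qed
  define H where "H = (\<lambda>t a. \<Sum>p\<in>P. xa a ^ fst p * (xa a + 1) ^ snd p * ev N (Dj (snd p) (Dj (fst p) h)) t (Iv k a @ v))"
  have RH: "R H"
    unfolding H_def
  proof (rule R_sum)
    show "finite P" by (simp add: P_def)
    fix p assume "p \<in> P"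
    show "R (\<lambda>t a. xa a ^ fst p * (xa a + 1) ^ snd p * ev N (Dj (snd p) (Dj (fst p) h)) t (Iv k a @ v))"
      unfolding Qp using R_mult[OF each[OF \<open>p \<in> P\<close>], of "Q p"] .
  qed
  have D00: "Dj 0 (Dj 0 h) = h" using Dj_0 less.prems by simp
  have rec: "ev N h t (Iv k (Suc a) @ v) = ev N h t (Iv k a @ v) + H t a" for t a
  proof -
    have "ev N h t (Iv k (Suc a) @ v) = ev N h t (xa a # (xa a + 1) # (Iv k a @ v))"
      by (rule ev_perm[OF less.prems(1)]) (simp add: Iv_Suc xa_def)
    also have "\<dots> = (\<Sum>p\<in>{..N} \<times> {..N}. xa a ^ fst p * (xa a + 1) ^ snd p * ev N (Dj (snd p) (Dj (fst p) h)) t (Iv k a @ v))"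
      by (rule ev_two)
    also have "\<dots> = ev N h t (Iv k a @ v) + H t a"
      unfolding H_def P_def by (subst sum.remove[of _ "(0,0)"]) (auto simp: D00)
    finally show ?thesis .
  qed
  obtain q where q: "\<And>t. ev N h t v = poly q t" using ev_poly_t by metis
  show ?case
    by (rule R_telescope[OF rec RH]) (simp add: Iv_0 q)
qed

lemma cloff_shift_row:
  "cloff 0 (map (\<lambda>r. 2 * r) (pre @ a # rest)) =
   cloff 0 (map (\<lambda>r. 2 * r) pre) @ map (\<lambda>y. int y - int (Suc (length pre))) [1..<2 * a + 1]
   @ cloff (Suc (length pre)) (map (\<lambda>r. 2 * r) rest)"
  by (simp add: cloff_append)

lemma Z_poly:
  assumes "symm h" "fs h" "dg d h"
  shows "\<exists>q. \<forall>a. Z N h (pre @ a # rest) = poly q (of_nat a)"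
proof -
  define A where "A = map (of_int :: int \<Rightarrow> rat) (cloff 0 (map (\<lambda>r. 2 * r) pre))"
  define B where "B = map (of_int :: int \<Rightarrow> rat) (cloff (Suc (length pre)) (map (\<lambda>r. 2 * r) rest))"
  define c where "c = (of_nat (2 * (sum_list pre + sum_list rest)) :: rat)"
  obtain q where q: "\<And>a. ev N h (c + 2 * of_nat a) (Iv (length pre) a @ (A @ B)) = poly q (of_nat a)"
    using R_diag[OF poly_interval[OF assms, of N "length pre" "A @ B"], of c] by metis
  have "Z N h (pre @ a # rest) = poly q (of_nat a)" for a
  proof -
    have "Z N h (pre @ a # rest) = ev N h (c + 2 * of_nat a) (A @ Iv (length pre) a @ B)"
      unfolding Z_def cloff_shift_row A_def B_def Iv_def c_def by (simp add: algebra_simps)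
    also have "\<dots> = ev N h (c + 2 * of_nat a) (Iv (length pre) a @ (A @ B))"
      by (rule ev_perm[OF assms(1)]) simp
    finally show ?thesis using q by simp
  qed
  then show ?thesis by blast
qed




lemma young_cons: "young rest \<Longrightarrow> sum_list rest < a \<Longrightarrow> young (a # rest)"
  unfolding young_def
  by (auto simp: sorted_append dest: member_le_sum_list)

lemma infinite_above: "(\<And>a::nat. M < a \<Longrightarrow> P a) \<Longrightarrow> infinite {a. P a}"
  unfolding infinite_nat_iff_unbounded
  by (metis (mono_tags, lifting) le_less_trans max.cobounded1 max.cobounded2 mem_Collect_eq lessI le_imp_less_Suc)

lemma stepB:
  assumes "symm h" "fs h" "dg d h"
    and H: "\<And>lam. young lam \<Longrightarrow> n0 \<le> sum_list lam \<Longrightarrow> Z N h lam = 0"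
  shows "Z N h L = 0"
proof -
  have claim: "\<forall>(pre::nat list) (rest::nat list). length pre = Suc k \<longrightarrow> young rest \<longrightarrow> Z N h (pre @ rest) = 0" for k
  proof (induction k)
    case 0
    show ?case
    proof (intro allI impI)
      fix pre :: "nat list" and rest assume "length pre = Suc 0" "young (rest :: nat list)"
      then obtain a where pre: "pre = [a]" by (metis length_0_conv length_Suc_conv)
      obtain q where q: "\<And>a. Z N h ([] @ a # rest) = poly q (of_nat a)" using Z_poly[OF assms(1-3)] by metis
      have "infinite {a. poly q (of_nat a :: rat) = 0}"
      proof (rule infinite_above[of "sum_list rest + n0"])
        fix a assume "sum_list rest + n0 < a"
        then have "Z N h (a # rest) = 0"
          using H young_cons[OF \<open>young rest\<close>] by simp
        then show "poly q (of_nat a :: rat) = 0" using q by simp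
      qed
      then show "Z N h (pre @ rest) = 0" using q poly_nat_zero pre by simp
    qed
  next
    case (Suc k)
    show ?case
    proof (intro allI impI)
      fix pre :: "nat list" and rest assume len: "length pre = Suc (Suc k)" and y: "young (rest :: nat list)"
      then obtain pre' a where pre: "pre = pre' @ [a]" by (metis length_0_conv nat.distinct(1) rev_exhaust)
      have len': "length pre' = Suc k" using len pre by simp
      obtain q where q: "\<And>a. Z N h (pre' @ a # rest) = poly q (of_nat a)" using Z_poly[OF assms(1-3)] by metis
      have "infinite {a. poly q (of_nat a :: rat) = 0}"
      proof (rule infinite_above[of "sum_list rest"])
        fix a assume "sum_list rest < a"
        then have "Z N h (pre' @ (a # rest)) = 0"
          using Suc.IH len' young_cons[OF y] by blast
        then show "poly q (of_nat a :: rat) = 0" using q by simp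
      qed
      then show "Z N h (pre @ rest) = 0" using q poly_nat_zero pre by simp
    qed
  qed
  show ?thesis
  proof (cases L)
    case Nil
    have "young []" by (simp add: young_def)
    then have "Z N h ([0] @ []) = 0" using claim[of 0] by (metis length_Cons list.size(3))
    then show ?thesis using Nil by (simp add: Z_def)
  next
    case (Cons x xs)
    have "young []" by (simp add: young_def)
    then have "Z N h (L @ []) = 0" using claim[of "length xs"] Cons by (metis length_Cons)
    then show ?thesis by simp
  qed
qed




definition cc :: "nat \<Rightarrow> nat \<Rightarrow> nat \<Rightarrow> rat" where
  "cc j j' m = (if j \<le> m then of_nat (j' choose (m - j)) else 0)"

lemma cc_big: "j + j' < m \<Longrightarrow> cc j j' m = 0"
  by (simp add: cc_def)

lemma pair_expand:
  assumes "j \<le> N" "j' \<le> N"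
  shows "e ^ j * (e + 1) ^ j' = (\<Sum>m\<le>2 * N. cc j j' m * e ^ m)"
proof -
  have "e ^ j * (e + 1) ^ j' = e ^ j * (\<Sum>l\<le>j'. of_nat (j' choose l) * e ^ l * 1 ^ (j' - l))"
    by (subst binomial_ring) simp
  also have "\<dots> = (\<Sum>l\<le>j'. of_nat (j' choose l) * e ^ (j + l))"
    by (simp add: sum_distrib_left power_add mult_ac)
  also have "\<dots> = (\<Sum>m\<in>(\<lambda>l. j + l) ` {..j'}. of_nat (j' choose (m - j)) * e ^ m)"
    by (subst sum.reindex) (auto simp: inj_on_def)
  also have "\<dots> = (\<Sum>m\<le>2 * N. cc j j' m * e ^ m)"
  proof (rule sum.mono_neutral_cong_left)
    show "(\<lambda>l. j + l) ` {..j'} \<subseteq> {..2 * N}" using assms by auto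
    show "\<forall>i\<in>{..2 * N} - (\<lambda>l. j + l) ` {..j'}. cc j j' i * e ^ i = 0"
    proof
      fix i assume i: "i \<in> {..2 * N} - (\<lambda>l. j + l) ` {..j'}"
      show "cc j j' i * e ^ i = 0"
      proof (cases "j \<le> i")
        case True
        then have "i = j + (i - j)" by simp
        then have "j' < i - j" using i by (metis DiffD2 atMost_iff image_eqI not_le)
        then show ?thesis by (simp add: cc_def)
      qed (simp add: cc_def)
    qed
  qed (auto simp: cc_def)
  finally show ?thesis .
qed

definition Q :: "nat \<Rightarrow> nat \<Rightarrow> symfun \<Rightarrow> symfun" where
  "Q N m h = (\<lambda>\<beta>. \<Sum>p\<in>{..N} \<times> {..N}. smult (cc (fst p) (snd p) m) (Dj (snd p) (Dj (fst p) h) \<beta>))"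

lemma ev_Q: "ev N (Q N m h) t w = (\<Sum>p\<in>{..N} \<times> {..N}. cc (fst p) (snd p) m * ev N (Dj (snd p) (Dj (fst p) h)) t w)"
  unfolding Q_def by (simp add: ev_sum ev_smult)

lemma ev_pair: "ev N h t (e # (e + 1) # w) = (\<Sum>m\<le>2 * N. e ^ m * ev N (Q N m h) t w)"
proof -
  have "ev N h t (e # (e + 1) # w) =
    (\<Sum>p\<in>{..N} \<times> {..N}. (\<Sum>m\<le>2 * N. cc (fst p) (snd p) m * e ^ m) * ev N (Dj (snd p) (Dj (fst p) h)) t w)"
    unfolding ev_two by (rule sum.cong) (auto simp: pair_expand)
  also have "\<dots> = (\<Sum>m\<le>2 * N. e ^ m * ev N (Q N m h) t w)"
    by (simp add: ev_Q sum_distrib_left sum_distrib_right mult_ac) (rule sum.swap)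
  finally show ?thesis .
qed

lemma symm_Q: "symm h \<Longrightarrow> symm (Q N m h)"
proof -
  assume s: "symm h"
  have "symm (Dj j' (Dj j h))" for j j' using s symm_Dj by blast
  then show ?thesis unfolding symm_def Q_def by simp
qed

lemma fs_Q: "fs h \<Longrightarrow> fs (Q N m h)"
proof -
  assume s: "fs h"
  have f: "fs (Dj j' (Dj j h))" for j j' using s fs_Dj by blast
  show ?thesis unfolding fs_def
  proof (intro allI impI)
    fix \<alpha> assume "Q N m h \<alpha> \<noteq> 0"
    then obtain p where "Dj (snd p) (Dj (fst p) h) \<alpha> \<noteq> 0"
      unfolding Q_def by (metis (no_types, lifting) smult_0_right sum.neutral)
    then show "finite (mon_support \<alpha>)" using f unfolding fs_def by blast
  qed
qed

lemma Q_big: "2 * N < m \<Longrightarrow> Q N m h = (\<lambda>_. 0)"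
  unfolding Q_def by (auto intro!: sum.neutral simp: cc_big fun_eq_iff)

lemma coeff_extract:
  fixes c :: "nat \<Rightarrow> rat"
  assumes "infinite X" "\<And>x. x \<in> X \<Longrightarrow> (\<Sum>m\<le>M. c m * x ^ m) = 0" "m \<le> M"
  shows "c m = 0"
proof -
  define p where "p = (\<Sum>m\<le>M. monom (c m) m)"
  have "poly p x = (\<Sum>m\<le>M. c m * x ^ m)" for x by (simp add: p_def poly_sum poly_monom)
  then have "X \<subseteq> {x. poly p x = 0}" using assms(2) by auto
  then have "p = 0" using assms(1) poly_roots_finite finite_subset by blast
  then have "coeff p m = 0" by simp
  moreover have "coeff p m = c m" using assms(3) by (simp add: p_def coeff_sum)
  ultimately show ?thesis by simp
qed

fun iterQ :: "nat \<Rightarrow> nat list \<Rightarrow> symfun \<Rightarrow> symfun" where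
  "iterQ N [] h = h"
| "iterQ N (m # ms) h = iterQ N ms (Q N m h)"

lemma cloff_zeros: "cloff k (replicate g 0) = []"
  by (induction g arbitrary: k) auto

lemma cloff_pair: "map (of_int :: int \<Rightarrow> rat) (cloff k [2]) = [- of_nat k, - of_nat k + 1]"
  by (simp add: numeral_eq_Suc)

definition W :: "nat list \<Rightarrow> rat list" where
  "W rs = map of_int (cloff 0 (map (\<lambda>r. 2 * r) rs))"

lemma W_snoc: "W (rs @ replicate g 0 @ [1]) = W rs @ [- of_nat (length rs + g), - of_nat (length rs + g) + 1]"
proof -
  have "W (rs @ replicate g 0 @ [1]) = W rs @ map of_int (cloff (length rs + g) [2])"
    by (simp add: W_def cloff_append cloff_zeros)
  then show ?thesis by (simp only: cloff_pair)
qed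

lemma peel:
  "\<forall>h. symm h \<longrightarrow> fs h \<longrightarrow> (\<forall>rs. set rs \<subseteq> {0, 1} \<longrightarrow> sum_list rs = k \<longrightarrow> ev N h T (W rs) = 0)
     \<longrightarrow> (\<forall>ms. length ms = k \<longrightarrow> poly (iterQ N ms h (\<lambda>_. 0)) T = 0)"
proof (induction k)
  case 0
  show ?case
  proof (intro allI impI)
    fix h :: symfun and ms :: "nat list"
    assume H: "\<forall>rs. set rs \<subseteq> {0, 1} \<longrightarrow> sum_list rs = 0 \<longrightarrow> ev N h T (W rs) = 0" and "length ms = 0"
    then have "ev N h T (W []) = 0" by simp
    then show "poly (iterQ N ms h (\<lambda>_. 0)) T = 0" using \<open>length ms = 0\<close> by (simp add: W_def)
  qed
next
  case (Suc k)
  show ?case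
  proof (intro allI impI)
    fix h :: symfun and ms :: "nat list"
    assume s: "symm h" and f: "fs h"
      and H: "\<forall>rs. set rs \<subseteq> {0, 1} \<longrightarrow> sum_list rs = Suc k \<longrightarrow> ev N h T (W rs) = 0"
      and len: "length ms = Suc k"
    then obtain m ms' where ms: "ms = m # ms'" "length ms' = k" by (metis length_Suc_conv)
    have HQ: "ev N (Q N m h) T (W rs) = 0" if rs: "set rs \<subseteq> {0, 1}" "sum_list rs = k" for rs
    proof (cases "m \<le> 2 * N")
      case False
      then show ?thesis by (simp add: Q_big ev_zero)
    next
      case True
      define X where "X = (\<lambda>g::nat. - (of_nat (length rs + g) :: rat)) ` UNIV"
      have "infinite X" unfolding X_def by (rule range_inj_infinite) (auto simp: inj_def)
      moreover have "(\<Sum>m\<le>2 * N. ev N (Q N m h) T (W rs) * x ^ m) = 0" if "x \<in> X" for x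
      proof -
        obtain g where x: "x = - of_nat (length rs + g)" using \<open>x \<in> X\<close> X_def by blast
        have "set (rs @ replicate g 0 @ [1]) \<subseteq> {0, 1}" "sum_list (rs @ replicate g 0 @ [1]) = Suc k"
          using rs by auto
        then have "ev N h T (W (rs @ replicate g 0 @ [1])) = 0" using H by blast
        then have "ev N h T (x # (x + 1) # W rs) = 0"
          unfolding W_snoc x[symmetric] using ev_perm[OF s, of "W rs @ [x, x + 1]" "x # (x + 1) # W rs"] by simp
        then show ?thesis unfolding ev_pair by (simp add: mult.commute)
      qed
      ultimately show ?thesis using True
        by (rule coeff_extract[where c = "\<lambda>m. ev N (Q N m h) T (W rs)" and M = "2 * N"])
    qed
    have "\<forall>ms. length ms = k \<longrightarrow> poly (iterQ N ms (Q N m h) (\<lambda>_. 0)) T = 0"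
      using Suc.IH symm_Q[OF s] fs_Q[OF f] HQ by blast
    then show "poly (iterQ N ms h (\<lambda>_. 0)) T = 0" using ms by simp
  qed
qed




lemma smult_sum2: "smult c (\<Sum>x\<in>A. f x) = (\<Sum>x\<in>A. smult c (f x))"
  by (induction A rule: infinite_finite_induct) (auto simp: smult_add_right)

lemma Dj_Dj_apply: "Dj j' (Dj j h) \<alpha> = h (cons0 j (cons0 j' \<alpha>))"
  by (simp add: Dj_def)

lemma iterQ_closed:
  "iterQ N ms h (\<lambda>_. 0) = (\<Sum>\<alpha>\<in>S N (2 * length ms).
      smult (\<Prod>i<length ms. cc (\<alpha> (2 * i)) (\<alpha> (2 * i + 1)) (ms ! i)) (h \<alpha>))"
proof (induction ms arbitrary: h)
  case Nil then show ?case by (simp add: S_0)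
next
  case (Cons m ms)
  let ?P = "\<lambda>\<alpha>. \<Prod>i<length ms. cc (\<alpha> (2 * i)) (\<alpha> (2 * i + 1)) (ms ! i)"
  have "iterQ N (m # ms) h (\<lambda>_. 0) = (\<Sum>\<alpha>\<in>S N (2 * length ms). smult (?P \<alpha>) (Q N m h \<alpha>))"
    using Cons by simp
  also have "\<dots> = (\<Sum>\<alpha>\<in>S N (2 * length ms). \<Sum>j\<le>N. \<Sum>j'\<le>N.
        smult (cc j j' m * ?P \<alpha>) (h (cons0 j (cons0 j' \<alpha>))))"
    unfolding Q_def Dj_Dj_apply
    by (simp add: smult_sum2 sum.cartesian_product split_def mult.commute)
  also have "\<dots> = (\<Sum>j\<le>N. \<Sum>j'\<le>N. \<Sum>\<alpha>\<in>S N (2 * length ms).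
        smult (cc j j' m * ?P \<alpha>) (h (cons0 j (cons0 j' \<alpha>))))"
    by (simp add: sum.swap[of _ "S N _"])
  also have "\<dots> = (\<Sum>\<alpha>\<in>S N (2 * length (m # ms)).
      smult (\<Prod>i<length (m # ms). cc (\<alpha> (2 * i)) (\<alpha> (2 * i + 1)) ((m # ms) ! i)) (h \<alpha>))"
  proof -
    have e: "2 * length (m # ms) = Suc (Suc (2 * length ms))" by simp
    have p: "(\<Prod>i<length (m # ms). cc (cons0 j (cons0 j' \<alpha>) (2 * i)) (cons0 j (cons0 j' \<alpha>) (2 * i + 1)) ((m # ms) ! i))
        = cc j j' m * ?P \<alpha>" for j j' \<alpha>
    proof -
      have "(\<Prod>i<length (m # ms). cc (cons0 j (cons0 j' \<alpha>) (2 * i)) (cons0 j (cons0 j' \<alpha>) (2 * i + 1)) ((m # ms) ! i))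
          = cc (cons0 j (cons0 j' \<alpha>) 0) (cons0 j (cons0 j' \<alpha>) 1) m *
            (\<Prod>i<length ms. cc (cons0 j (cons0 j' \<alpha>) (2 * Suc i)) (cons0 j (cons0 j' \<alpha>) (2 * Suc i + 1)) (ms ! i))"
        by (simp only: length_Cons prod.lessThan_Suc_shift) simp
      also have "\<dots> = cc j j' m * ?P \<alpha>" by simp
      finally show ?thesis .
    qed
    show ?thesis unfolding e sum_S_Suc p ..
  qed
  finally show ?case .
qed




definition sw :: "nat \<Rightarrow> nat \<Rightarrow> nat \<Rightarrow> nat" where
  "sw c a x = (if x = c then a else if x = a then c else x)"

lemma bij_sw: "bij (sw c a)"
  by (rule o_bij[where g = "sw c a"]) (auto simp: sw_def fun_eq_iff)

lemma perm_exists: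
  "finite (B :: nat set) \<Longrightarrow> finite (A :: nat set) \<Longrightarrow> card A = card B \<Longrightarrow> \<exists>\<sigma>. bij \<sigma> \<and> \<sigma> ` B = A"
proof (induction B arbitrary: A rule: finite_induct)
  case empty
  then have "A = {}" by simp
  then show ?case using bij_id by blast
next
  case (insert b B)
  then have "card A = Suc (card B)" by simp
  then have "A \<noteq> {}" by (metis card.empty nat.distinct(1))
  then obtain a where a: "a \<in> A" by blast
  have "card (A - {a}) = card B" using insert a by simp
  then obtain \<sigma> where s: "bij \<sigma>" "\<sigma> ` B = A - {a}" using insert by (meson finite_Diff)
  define c where "c = \<sigma> b"
  have cn: "c \<notin> A - {a}"
  proof
    assume "c \<in> A - {a}"
    then obtain b' where "b' \<in> B" "\<sigma> b' = \<sigma> b" using s(2) c_def by (metis imageE)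
    then show False using s(1) insert(2) by (metis bij_def injD)
  qed
  have "bij (sw c a \<circ> \<sigma>)" using bij_sw s(1) bij_comp by blast
  moreover have "(sw c a \<circ> \<sigma>) ` insert b B = A"
  proof -
    have "(sw c a \<circ> \<sigma>) ` insert b B = sw c a ` (\<sigma> ` insert b B)" by (rule image_comp[symmetric])
    also have "\<sigma> ` insert b B = insert c (A - {a})" using s(2) c_def by simp
    finally have "(sw c a \<circ> \<sigma>) ` insert b B = insert (sw c a c) (sw c a ` (A - {a}))" by simp
    also have "sw c a ` (A - {a}) = A - {a}"
      using cn by (auto simp: sw_def image_iff)
    also have "sw c a c = a" by (simp add: sw_def)
    finally show ?thesis using a by auto
  qed
  ultimately show ?case by blast
qed




definition sq :: "(nat \<Rightarrow> nat) \<Rightarrow> nat" where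
  "sq \<alpha> = (\<Sum>i\<in>mon_support \<alpha>. (\<alpha> i)^2)"

lemma sum_supp_sub:
  "finite A \<Longrightarrow> mon_support \<alpha> \<subseteq> A \<Longrightarrow> F 0 = 0 \<Longrightarrow> (\<Sum>i\<in>mon_support \<alpha>. F (\<alpha> i)) = (\<Sum>i\<in>A. F (\<alpha> i))"
  by (rule sum.mono_neutral_left) (auto simp: mon_support_def)

lemma blocks: "(\<Sum>p<2 * K. f p) = (\<Sum>i<K. f (2 * i) + f (2 * i + 1))" for f :: "nat \<Rightarrow> nat"
  by (induction K) (auto simp: numeral_eq_Suc)

lemma supp_S: "\<alpha> \<in> S N n \<Longrightarrow> mon_support \<alpha> \<subseteq> {..<n}"
  by (auto simp: S_def mon_support_def not_less[symmetric])

lemma eq_from_le_sum: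
  fixes f g :: "nat \<Rightarrow> nat"
  assumes "finite I" "\<And>i. i \<in> I \<Longrightarrow> f i \<le> g i" "sum g I \<le> sum f I" "i \<in> I"
  shows "f i = g i"
proof (rule ccontr)
  assume "f i \<noteq> g i"
  then have "f i < g i" using assms(2,4) by force
  then have "sum f I < sum g I" using assms by (intro sum_strict_mono_ex1) auto
  then show False using assms(3) by simp
qed

lemma deg_blocks:
  assumes a: "\<alpha> \<in> S N (2 * K)" shows "mon_degree \<alpha> = (\<Sum>i<K. \<alpha> (2 * i) + \<alpha> (2 * i + 1))"
proof -
  have "mon_degree \<alpha> = (\<Sum>p<2*K. \<alpha> p)" by (rule mon_degree_sub) (use supp_S[OF a] in auto)
  then show ?thesis using blocks by simp
qed

lemma sq_blocks:
  assumes a: "\<alpha> \<in> S N (2 * K)" shows "sq \<alpha> = (\<Sum>i<K. \<alpha> (2 * i) ^ 2 + \<alpha> (2 * i + 1) ^ 2)"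
proof -
  have "sq \<alpha> = (\<Sum>p<2*K. \<alpha> p ^ 2)" unfolding sq_def
    by (rule sum_supp_sub) (use supp_S[OF a] in auto)
  then show ?thesis using blocks[of "\<lambda>p. (\<alpha> p)^2" K] by simp
qed




lemma final:
  fixes h :: symfun
  assumes s: "symm h" and f: "fs h" and b: "bd N h" and dgN: "dg N h" and nz: "h \<alpha>00 \<noteq> 0"
    and V: "\<And>K ms. length ms = K \<Longrightarrow> poly (iterQ N ms h (\<lambda>_. 0)) (of_nat (2 * K)) = 0"
  shows False
proof -
  define A where "A = {\<alpha>. h \<alpha> \<noteq> 0}"
  have finA: "\<alpha> \<in> A \<Longrightarrow> finite (mon_support \<alpha>)" for \<alpha> using f by (auto simp: A_def fs_def)
  have finD: "finite (mon_degree ` A)"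
    by (rule finite_subset[of _ "{..N}"]) (use dgN in \<open>auto simp: A_def dg_def\<close>)
  define d where "d = Max (mon_degree ` A)"
  have d_ge: "\<alpha> \<in> A \<Longrightarrow> mon_degree \<alpha> \<le> d" for \<alpha> using finD by (simp add: d_def)
  have "d \<in> mon_degree ` A" unfolding d_def using finD nz by (intro Max_in) (auto simp: A_def)
  define Ad where "Ad = {\<alpha> \<in> A. mon_degree \<alpha> = d}"
  have Ad_ne: "Ad \<noteq> {}" using \<open>d \<in> mon_degree ` A\<close> by (auto simp: Ad_def)
  have sq_bd: "sq \<alpha> \<le> N * N" if "\<alpha> \<in> A" for \<alpha>
  proof -
    have "sq \<alpha> \<le> (\<Sum>i\<in>mon_support \<alpha>. N * \<alpha> i)"
      unfolding sq_def
    proof (rule sum_mono)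
      fix i show "\<alpha> i ^ 2 \<le> N * \<alpha> i"
        using b that by (auto simp: A_def bd_def power2_eq_square)
    qed
    also have "\<dots> = N * mon_degree \<alpha>" by (simp add: mon_degree_def sum_distrib_left)
    also have "\<dots> \<le> N * N" using dgN that by (auto simp: A_def dg_def)
    finally show ?thesis .
  qed
  have finQ: "finite (sq ` Ad)"
    by (rule finite_subset[of _ "{..N*N}"]) (use sq_bd in \<open>auto simp: Ad_def\<close>)
  define q where "q = Min (sq ` Ad)"
  have q_ge: "\<alpha> \<in> Ad \<Longrightarrow> q \<le> sq \<alpha>" for \<alpha> using finQ by (simp add: q_def)
  have "q \<in> sq ` Ad" unfolding q_def using finQ Ad_ne by (intro Min_in) auto
  then obtain \<alpha>0 where a0: "\<alpha>0 \<in> Ad" "sq \<alpha>0 = q" by auto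
  have h0: "h \<alpha>0 \<noteq> 0" and deg0: "mon_degree \<alpha>0 = d" using a0 by (auto simp: Ad_def A_def)
  have fin0: "finite (mon_support \<alpha>0)" using a0 finA by (auto simp: Ad_def)
  define s where "s = card (mon_support \<alpha>0)"
  define Ev where "Ev = (\<lambda>i. 2 * i) ` {..<s}"
  have cardEv: "card Ev = s" unfolding Ev_def by (subst card_image) (auto simp: inj_on_def)
  obtain \<sigma> where sig: "bij \<sigma>" "\<sigma> ` Ev = mon_support \<alpha>0"
  proof -
    have "finite Ev" unfolding Ev_def by simp
    then show ?thesis using perm_exists[of Ev "mon_support \<alpha>0"] fin0 cardEv s_def that by metis
  qed
  define \<alpha>1 where "\<alpha>1 = \<alpha>0 \<circ> \<sigma>"
  have h1: "h \<alpha>1 = h \<alpha>0" using s sig(1) by (simp add: symm_def \<alpha>1_def)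
  have supp1: "mon_support \<alpha>1 = Ev"
  proof -
    have "i \<in> mon_support \<alpha>1 \<longleftrightarrow> i \<in> Ev" for i
    proof -
      have "i \<in> mon_support \<alpha>1 \<longleftrightarrow> \<sigma> i \<in> mon_support \<alpha>0" by (simp add: \<alpha>1_def mon_support_def)
      also have "\<dots> \<longleftrightarrow> i \<in> Ev" using sig by (metis bij_def inj_image_mem_iff)
      finally show ?thesis .
    qed
    then show ?thesis by blast
  qed
  have bb: "bij_betw \<sigma> Ev (mon_support \<alpha>0)"
    using sig by (metis bij_betw_imageI bij_def inj_on_subset subset_UNIV)
  have transfer: "(\<Sum>i\<in>mon_support \<alpha>1. F (\<alpha>1 i)) = (\<Sum>i\<in>mon_support \<alpha>0. F (\<alpha>0 i))" for F :: "nat \<Rightarrow> nat"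
    using sum.reindex_bij_betw[OF bb, of "\<lambda>j. F (\<alpha>0 j)"] supp1 by (simp add: \<alpha>1_def)
  have deg1: "mon_degree \<alpha>1 = d" using transfer[of "\<lambda>x. x"] deg0 by (simp add: mon_degree_def)
  have sq1: "sq \<alpha>1 = q" using transfer[of "\<lambda>x. x^2"] a0 by (simp add: sq_def)
  have a1_zero: "\<alpha>1 p = 0" if "p \<notin> Ev" for p using supp1 that by (auto simp: mon_support_def)
  have a1_odd: "\<alpha>1 (2 * i + 1) = 0" for i by (rule a1_zero) (auto simp: Ev_def; presburger)
  have a1_big: "\<alpha>1 p = 0" if "2 * s \<le> p" for p by (rule a1_zero) (use that in \<open>auto simp: Ev_def\<close>)
  have hroot: "poly (h \<alpha>1) (of_nat (2 * K)) = 0" if K: "s \<le> K" for K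
  proof -
    define ms where "ms = map (\<lambda>i. \<alpha>1 (2 * i)) [0..<K]"
    have lenms: "length ms = K" by (simp add: ms_def)
    have msi: "i < K \<Longrightarrow> ms ! i = \<alpha>1 (2 * i)" for i by (simp add: ms_def)
    define T where "T = (of_nat (2 * K) :: rat)"
    define Pr where "Pr = (\<lambda>\<alpha>. \<Prod>i<K. cc (\<alpha> (2 * i)) (\<alpha> (2 * i + 1)) (ms ! i))"
    have "0 = poly (iterQ N ms h (\<lambda>_. 0)) T" using V[OF lenms] by (simp add: T_def)
    also have "\<dots> = (\<Sum>\<alpha>\<in>S N (2*K). Pr \<alpha> * poly (h \<alpha>) T)"
      unfolding iterQ_closed lenms by (simp add: poly_sum Pr_def)
    finally have sum0: "(\<Sum>\<alpha>\<in>S N (2*K). Pr \<alpha> * poly (h \<alpha>) T) = 0" by simp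
    have a1S: "\<alpha>1 \<in> S N (2*K)"
      unfolding S_def using a1_big K b h1 h0 by (auto simp: bd_def)
    have Pr1: "Pr \<alpha>1 = 1" unfolding Pr_def by (rule prod.neutral) (simp add: msi a1_odd cc_def)
    have deg_a1: "d = (\<Sum>i<K. \<alpha>1 (2 * i))" using deg_blocks[OF a1S] deg1 a1_odd by simp
    have sq_a1: "q = (\<Sum>i<K. \<alpha>1 (2 * i) ^ 2)" using sq_blocks[OF a1S] sq1 a1_odd by simp
    have key: "Pr \<alpha> * poly (h \<alpha>) T = (if Pr \<alpha> \<noteq> 0 \<and> h \<alpha> \<noteq> 0 then poly (h \<alpha>1) T else 0)"
      if aS: "\<alpha> \<in> S N (2*K)" for \<alpha>
    proof (cases "Pr \<alpha> \<noteq> 0 \<and> h \<alpha> \<noteq> 0")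
      case False then show ?thesis by auto
    next
      case True
      have ccnz: "cc (\<alpha> (2 * i)) (\<alpha> (2 * i + 1)) (\<alpha>1 (2 * i)) \<noteq> 0" if "i < K" for i
        using True that by (auto simp: Pr_def prod_zero_iff msi)
      have le1: "\<alpha>1 (2 * i) \<le> \<alpha> (2 * i) + \<alpha> (2 * i + 1)" if "i < K" for i
        using ccnz[OF that] by (auto simp: cc_def binomial_eq_0_iff split: if_splits)
      have "mon_degree \<alpha> \<le> d" using d_ge True by (simp add: A_def)
      then have dsum: "(\<Sum>i<K. \<alpha> (2 * i) + \<alpha> (2 * i + 1)) \<le> (\<Sum>i<K. \<alpha>1 (2 * i))"
        using deg_blocks[OF aS] deg_a1 by simp
      have eq1: "\<alpha>1 (2 * i) = \<alpha> (2 * i) + \<alpha> (2 * i + 1)" if "i < K" for i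
        using eq_from_le_sum[of "{..<K}" "\<lambda>i. \<alpha>1 (2 * i)" "\<lambda>i. \<alpha> (2 * i) + \<alpha> (2 * i + 1)" i] le1 dsum that
        by simp
      have "mon_degree \<alpha> = d" using deg_blocks[OF aS] deg_a1 eq1 by simp
      then have "\<alpha> \<in> Ad" using True by (simp add: Ad_def A_def)
      then have "q \<le> sq \<alpha>" by (rule q_ge)
      then have ssum: "(\<Sum>i<K. \<alpha>1 (2 * i) ^ 2) \<le> (\<Sum>i<K. \<alpha> (2 * i) ^ 2 + \<alpha> (2 * i + 1) ^ 2)"
        using sq_blocks[OF aS] sq_a1 by simp
      have le2: "\<alpha> (2 * i) ^ 2 + \<alpha> (2 * i + 1) ^ 2 \<le> \<alpha>1 (2 * i) ^ 2" if "i < K" for i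
        using eq1[OF that] by (simp add: power2_sum)
      have eq2: "\<alpha> (2 * i) ^ 2 + \<alpha> (2 * i + 1) ^ 2 = \<alpha>1 (2 * i) ^ 2" if "i < K" for i
        using eq_from_le_sum[of "{..<K}" "\<lambda>i. \<alpha> (2 * i) ^ 2 + \<alpha> (2 * i + 1) ^ 2" "\<lambda>i. \<alpha>1 (2 * i) ^ 2" i]
          le2 ssum that by simp
      have xy0: "\<alpha> (2 * i) * \<alpha> (2 * i + 1) = 0" if "i < K" for i
        using eq2[OF that] eq1[OF that] by (simp add: power2_sum)
      have PrOne: "Pr \<alpha> = 1" unfolding Pr_def
        by (rule prod.neutral) (simp add: msi eq1 cc_def)
      have big: "\<alpha> p = 0" if "2 * K \<le> p" for p using aS that by (simp add: S_def)
      have blockfacts: "(\<alpha> (2 * i) = \<alpha>1 (2 * i) \<and> \<alpha> (2 * i + 1) = 0) \<or>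
                        (\<alpha> (2 * i) = 0 \<and> \<alpha> (2 * i + 1) = \<alpha>1 (2 * i))" for i
      proof (cases "i < K")
        case True
        then show ?thesis using xy0[OF True] eq1[OF True] by auto
      next
        case False
        then show ?thesis using big a1_big K by auto
      qed
      define F where "F = {i. \<alpha> (2 * i) \<noteq> \<alpha>1 (2 * i)}"
      have inF: "i \<in> F \<Longrightarrow> \<alpha> (2 * i) = 0 \<and> \<alpha> (2 * i + 1) = \<alpha>1 (2 * i)" for i
        using blockfacts[of i] by (auto simp: F_def)
      have notF: "i \<notin> F \<Longrightarrow> \<alpha> (2 * i) = \<alpha>1 (2 * i) \<and> \<alpha> (2 * i + 1) = 0" for i
        using blockfacts[of i] by (auto simp: F_def)
      define \<tau> where "\<tau> = (\<lambda>p::nat. if p div 2 \<in> F then (if even p then p + 1 else p - 1) else p)"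
      have pc: "\<exists>i. p = 2 * i \<or> p = 2 * i + 1" for p :: nat by presburger
      have "bij \<tau>"
      proof (rule o_bij[where g = \<tau>])
        show "\<tau> \<circ> \<tau> = id"
        proof
          fix p :: nat
          obtain i where "p = 2 * i \<or> p = 2 * i + 1" using pc by blast
          then show "(\<tau> \<circ> \<tau>) p = id p" by (auto simp: \<tau>_def)
        qed
        then show "\<tau> \<circ> \<tau> = id" .
      qed
      moreover have "\<alpha>1 \<circ> \<tau> = \<alpha>"
      proof
        fix p :: nat
        obtain i where "p = 2 * i \<or> p = 2 * i + 1" using pc by blast
        then show "(\<alpha>1 \<circ> \<tau>) p = \<alpha> p"
          using inF[of i] notF[of i] a1_odd[of i] by (auto simp: \<tau>_def)
      qed
      ultimately have "h \<alpha> = h \<alpha>1" using s unfolding symm_def by metis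
      then show ?thesis using True PrOne by simp
    qed
    define G where "G = {\<alpha> \<in> S N (2*K). Pr \<alpha> \<noteq> 0 \<and> h \<alpha> \<noteq> 0}"
    have "(\<Sum>\<alpha>\<in>S N (2*K). Pr \<alpha> * poly (h \<alpha>) T)
        = (\<Sum>\<alpha>\<in>S N (2*K). (if \<alpha> \<in> G then poly (h \<alpha>1) T else 0))"
      by (rule sum.cong) (auto simp: key G_def)
    also have "\<dots> = of_nat (card G) * poly (h \<alpha>1) T"
    proof -
      have "S N (2*K) \<inter> G = G" by (auto simp: G_def)
      then show ?thesis by (simp add: sum.If_cases[of "S N (2*K)" "\<lambda>\<alpha>. \<alpha> \<in> G"] finite_S)
    qed
    finally have "of_nat (card G) * poly (h \<alpha>1) T = 0" using sum0 by simp
    moreover have "card G \<noteq> 0"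
    proof -
      have "finite G" by (rule finite_subset[OF _ finite_S[of N "2*K"]]) (auto simp: G_def)
      moreover have "\<alpha>1 \<in> G" using a1S Pr1 h1 h0 by (simp add: G_def)
      ultimately show ?thesis by auto
    qed
    ultimately show ?thesis by (simp add: T_def)
  qed
  have "infinite ((\<lambda>K. of_nat (2 * K) :: rat) ` {K. s \<le> K})"
  proof -
    have "infinite {K. s \<le> K}" by (rule infinite_above[of s]) simp
    then show ?thesis by (simp add: finite_image_iff inj_on_def)
  qed
  moreover have "(\<lambda>K. of_nat (2 * K) :: rat) ` {K. s \<le> K} \<subseteq> {x. poly (h \<alpha>1) x = 0}" using hroot by auto
  ultimately have "h \<alpha>1 = 0" using poly_roots_finite finite_subset by blast
  then show False using h1 h0 by simp
qed




theorem corollary4p3: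
  fixes f g :: symfun
  assumes "is_symfun f" and "is_symfun g"
    and "\<exists>n0. \<forall>lam. young lam \<and> size_yd lam \<ge> n0 \<longrightarrow>
           eval_contents f (double_yd lam) = eval_contents g (double_yd lam)"
  shows "f = g"
proof (rule ccontr)
  assume "f \<noteq> g"
  then obtain \<alpha>00 where ne: "f \<alpha>00 \<noteq> g \<alpha>00" by auto
  define h where "h = (\<lambda>\<alpha>. f \<alpha> - g \<alpha>)"
  obtain Df where Df: "\<And>\<alpha>. f \<alpha> \<noteq> 0 \<Longrightarrow> mon_degree \<alpha> \<le> Df" using assms(1) unfolding is_symfun_def by blast
  obtain Dg where Dg: "\<And>\<alpha>. g \<alpha> \<noteq> 0 \<Longrightarrow> mon_degree \<alpha> \<le> Dg" using assms(2) unfolding is_symfun_def by blast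
  have ff: "\<And>\<alpha>. f \<alpha> \<noteq> 0 \<Longrightarrow> finite (mon_support \<alpha>)" using assms(1) unfolding is_symfun_def by blast
  have fg: "\<And>\<alpha>. g \<alpha> \<noteq> 0 \<Longrightarrow> finite (mon_support \<alpha>)" using assms(2) unfolding is_symfun_def by blast
  have sf: "\<And>\<sigma> \<alpha>. bij \<sigma> \<Longrightarrow> f (\<alpha> \<circ> \<sigma>) = f \<alpha>" using assms(1) unfolding is_symfun_def by blast
  have sg: "\<And>\<sigma> \<alpha>. bij \<sigma> \<Longrightarrow> g (\<alpha> \<circ> \<sigma>) = g \<alpha>" using assms(2) unfolding is_symfun_def by blast
  define N where "N = max Df Dg"
  have bdf: "bd N f" unfolding bd_def
    using Df ff entry_le_degree N_def by (meson le_trans max.cobounded1)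
  have bdg: "bd N g" unfolding bd_def
    using Dg fg entry_le_degree N_def by (meson le_trans max.cobounded2)
  have sh: "symm h" unfolding symm_def h_def using sf sg by simp
  have fh: "fs h" unfolding fs_def h_def using ff fg by force
  have dh: "dg N h" unfolding dg_def h_def using Df Dg N_def
    by (metis diff_zero le_trans max.cobounded1 max.cobounded2 minus_diff_eq neg_equal_0_iff_equal)
  have bh: "bd N h" unfolding bd_def h_def using bdf bdg unfolding bd_def by force
  have nz: "h \<alpha>00 \<noteq> 0" using ne by (simp add: h_def)
  obtain n0 where n0: "\<And>lam. young lam \<Longrightarrow> size_yd lam \<ge> n0 \<Longrightarrow>
           eval_contents f (double_yd lam) = eval_contents g (double_yd lam)" using assms(3) by blast
  have HZ: "Z N h lam = 0" if "young lam" "n0 \<le> sum_list lam" for lam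
    unfolding h_def
    by (rule hyp_to_Z[OF bdf bdg]) (use sh that n0 in \<open>auto simp: h_def size_yd_def\<close>)
  have allZ: "Z N h L = 0" for L by (rule stepB[OF sh fh dh HZ])
  have V: "poly (iterQ N ms h (\<lambda>_. 0)) (of_nat (2 * K)) = 0" if "length ms = K" for K ms
  proof -
    have "ev N h (of_nat (2 * K)) (W rs) = 0" if "set rs \<subseteq> {0, 1}" "sum_list rs = K" for rs
      using allZ[of rs] that by (simp add: Z_def W_def)
    then show ?thesis using peel[of K N "of_nat (2 * K)"] sh fh \<open>length ms = K\<close> by blast
  qed
  show False by (rule final[OF sh fh bh dh nz V])
qed


end
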